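(* Let $X$ be an $X$-set parameter and let $G$ be a graph with no isolated vertices. If there exists an automorphism $\varphi$ of $\mathscr{X}^{\rm TAR}(G)$ with $\varphi(V(G))\neq V(G)$, then $\mathscr{X}^{\rm TAR}(G)$ has a perfect matching.
   Context: All graphs are simple, finite, with nonempty vertex set. An $X$-set parameter is a graph parameter $X(G)$ defined as the minimum cardinality of an $X$-set of $G$, where the $X$-sets of each graph are subsets of its vertex set determined by some property satisfying: (1) supersets (within $V(G)$) of $X$-sets are $X$-sets; (2) the empty set is never an $X$-set; (3) an $X$-set of a disconnected graph is the union of an $X$-set of each component; (4) if $G$ has no isolated vertices, every set of $|V(G)|-1$ vertices is an $X$-set. The $X$-TAR graph $\mathscr{X}^{\rm TAR}(G)$ has as vertices all $X$-sets of $G$ (so $V(G)$ itself is a vertex), with $S_1,S_2$ adjacent iff $|S_1\ominus S_2|=1$ (symmetric difference). *)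

theory Defs
  imports Main
begin

definition graph :: "'a set \<Rightarrow> 'a set set \<Rightarrow> bool" where
  "graph V E \<longleftrightarrow> finite V \<and> V \<noteq> {} \<and> (\<forall>e\<in>E. e \<subseteq> V \<and> card e = 2)"

definition isolated :: "'a set \<Rightarrow> 'a set set \<Rightarrow> 'a \<Rightarrow> bool" where
  "isolated V E v \<longleftrightarrow> v \<in> V \<and> (\<forall>e\<in>E. v \<notin> e)"

definition no_isolated :: "'a set \<Rightarrow> 'a set set \<Rightarrow> bool" where
  "no_isolated V E \<longleftrightarrow> (\<forall>v\<in>V. \<not> isolated V E v)"

definition adj :: "'a set set \<Rightarrow> 'a \<Rightarrow> 'a \<Rightarrow> bool" where
  "adj E u v \<longleftrightarrow> {u, v} \<in> E"

definition component :: "'a set set \<Rightarrow> 'a \<Rightarrow> 'a set" where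
  "component E v = {u. (adj E)\<^sup>*\<^sup>* v u}"

definition components :: "'a set \<Rightarrow> 'a set set \<Rightarrow> 'a set set" where
  "components V E = component E ` V"

definition disconnected :: "'a set \<Rightarrow> 'a set set \<Rightarrow> bool" where
  "disconnected V E \<longleftrightarrow> (\<exists>u\<in>V. \<exists>v\<in>V. \<not> (adj E)\<^sup>*\<^sup>* u v)"

definition induced_edges :: "'a set set \<Rightarrow> 'a set \<Rightarrow> 'a set set" where
  "induced_edges E C = {e \<in> E. e \<subseteq> C}"

text \<open>An X-set property: assigns to every graph (V,E) on vertex type 'a its family
  of X-sets, satisfying the axioms (0) X-sets are subsets of V(G), (1)-(4) of the paper,
  and such that the parameter (minimum cardinality) is defined, i.e. X-sets exist.\<close>
definition Xset_property :: "('a set \<Rightarrow> 'a set set \<Rightarrow> 'a set set) \<Rightarrow> bool" where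
  "Xset_property X \<longleftrightarrow>
    (\<forall>V E. graph V E \<longrightarrow>
       (\<forall>S\<in>X V E. S \<subseteq> V)
     \<and> X V E \<noteq> {}
     \<and> (\<forall>S T. S \<in> X V E \<and> S \<subseteq> T \<and> T \<subseteq> V \<longrightarrow> T \<in> X V E)
     \<and> {} \<notin> X V E
     \<and> (disconnected V E \<longrightarrow>
          (\<forall>S. S \<in> X V E \<longleftrightarrow>
               S \<subseteq> V \<and> (\<forall>C\<in>components V E. S \<inter> C \<in> X C (induced_edges E C))))
     \<and> (no_isolated V E \<longrightarrow> (\<forall>v\<in>V. V - {v} \<in> X V E)))"

definition TAR_vertices :: "('a set \<Rightarrow> 'a set set \<Rightarrow> 'a set set) \<Rightarrow> 'a set \<Rightarrow> 'a set set \<Rightarrow> 'a set set" where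
  "TAR_vertices X V E = X V E"

definition TAR_edges :: "('a set \<Rightarrow> 'a set set \<Rightarrow> 'a set set) \<Rightarrow> 'a set \<Rightarrow> 'a set set \<Rightarrow> 'a set set set" where
  "TAR_edges X V E = {{S1, S2} | S1 S2. S1 \<in> X V E \<and> S2 \<in> X V E \<and>
                         card ((S1 - S2) \<union> (S2 - S1)) = 1}"

definition graph_automorphism :: "'b set \<Rightarrow> 'b set set \<Rightarrow> ('b \<Rightarrow> 'b) \<Rightarrow> bool" where
  "graph_automorphism V E f \<longleftrightarrow> bij_betw f V V \<and>
     (\<forall>u\<in>V. \<forall>v\<in>V. {u, v} \<in> E \<longleftrightarrow> {f u, f v} \<in> E)"

definition has_perfect_matching :: "'b set \<Rightarrow> 'b set set \<Rightarrow> bool" where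
  "has_perfect_matching V E \<longleftrightarrow> (\<exists>M. M \<subseteq> E \<and> (\<forall>v\<in>V. \<exists>!e. e \<in> M \<and> v \<in> e))"

end

theory Submission
  imports Defs
begin

abbreviation sd :: "'a set \<Rightarrow> 'a set \<Rightarrow> 'a set" where
  "sd A B \<equiv> (A - B) \<union> (B - A)"

fun RR :: "'a set set \<Rightarrow> nat \<Rightarrow> 'a set \<Rightarrow> 'a set \<Rightarrow> bool" where
  "RR F 0 A B = (A = B)"
| "RR F (Suc k) A B = (RR F k A B \<or> (\<exists>C\<in>F. RR F k A C \<and> card (sd C B) = 1))"

lemma RR_card:
  assumes fin: "finite V" and sub: "\<forall>S\<in>F. S \<subseteq> V"
    and up: "\<forall>S T. S \<in> F \<and> S \<subseteq> T \<and> T \<subseteq> V \<longrightarrow> T \<in> F"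
    and A: "A \<in> F"
  shows "B \<in> F \<Longrightarrow> RR F k A B \<longleftrightarrow> card (sd A B) \<le> k"
proof (induction k arbitrary: B)
  case 0
  have "finite (sd A B)" using fin sub A 0 by (meson finite_Un finite_Diff finite_subset)
  then show ?case by auto
next
  case (Suc k)
  have finAB: "finite (sd A B)" using fin sub A Suc.prems by (meson finite_Un finite_Diff finite_subset)
  show ?case
  proof
    assume "RR F (Suc k) A B"
    then consider "RR F k A B" | C where "C \<in> F" "RR F k A C" "card (sd C B) = 1" by auto
    then show "card (sd A B) \<le> Suc k"
    proof cases
      case 1 then show ?thesis using Suc by auto
    next
      case 2
      have fAC: "finite (sd A C)" using fin sub A 2 by (meson finite_Un finite_Diff finite_subset)
      have fCB: "finite (sd C B)" using fin sub Suc.prems 2 by (meson finite_Un finite_Diff finite_subset)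
      have "sd A B \<subseteq> sd A C \<union> sd C B" by blast
      then have "card (sd A B) \<le> card (sd A C \<union> sd C B)" using fAC fCB by (simp add: card_mono)
      also have "\<dots> \<le> card (sd A C) + card (sd C B)" by (rule card_Un_le)
      finally show ?thesis using Suc.IH[OF 2(1)] 2 by simp
    qed
  next
    assume c: "card (sd A B) \<le> Suc k"
    show "RR F (Suc k) A B"
    proof (cases "card (sd A B) \<le> k")
      case True then show ?thesis using Suc by simp
    next
      case False
      then have ck: "card (sd A B) = Suc k" using c by simp
      have BV: "B \<subseteq> V" and AV: "A \<subseteq> V" using sub Suc.prems A by auto
      obtain C y where C: "C \<in> F" "sd A C = sd A B - {y}" "y \<in> sd A B" "sd C B = {y}"
      proof (cases "A - B = {}")
        case False
        then obtain y where y: "y \<in> A" "y \<notin> B" by auto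
        have "insert y B \<in> F" using up[rule_format, of B "insert y B"] Suc.prems y AV BV by blast
        moreover have "sd A (insert y B) = sd A B - {y}" using y by blast
        moreover have "sd (insert y B) B = {y}" using y by blast
        ultimately show ?thesis using that y by blast
      next
        case True
        have "sd A B \<noteq> {}" using ck by (metis card.empty nat.distinct(1))
        then have "B - A \<noteq> {}" using True by simp
        then obtain y where y: "y \<in> B" "y \<notin> A" by blast
        have "B - {y} \<in> F" using up[rule_format, of A "B - {y}"] A True y BV by blast
        moreover have "sd A (B - {y}) = sd A B - {y}" using y by blast
        moreover have "sd (B - {y}) B = {y}" using y by blast
        ultimately show ?thesis using that y by blast
      qed
      have "card (sd A C) = k" using C(2,3) ck finAB by simp
      then have "RR F k A C" using Suc.IH[OF C(1)] by simp
      moreover have "card (sd C B) = 1" using C(4) by simp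
      ultimately have "\<exists>C'\<in>F. RR F k A C' \<and> card (sd C' B) = 1" using C(1) by blast
      then show ?thesis by simp
    qed
  qed
qed

lemma RR_pres:
  assumes bij: "bij_betw \<phi> F F"
    and ed: "\<forall>u\<in>F. \<forall>w\<in>F. card (sd u w) = 1 \<longleftrightarrow> card (sd (\<phi> u) (\<phi> w)) = 1"
    and A: "A \<in> F"
  shows "B \<in> F \<Longrightarrow> RR F k (\<phi> A) (\<phi> B) \<longleftrightarrow> RR F k A B"
proof (induction k arbitrary: B)
  case 0
  then show ?case using bij A by (auto simp: bij_betw_def inj_on_def)
next
  case (Suc k)
  have img: "\<phi> ` F = F" using bij by (simp add: bij_betw_def)
  have "(\<exists>C\<in>F. RR F k (\<phi> A) C \<and> card (sd C (\<phi> B)) = 1) \<longleftrightarrow>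
        (\<exists>C\<in>F. RR F k A C \<and> card (sd C B) = 1)"
  proof
    assume "\<exists>C\<in>F. RR F k (\<phi> A) C \<and> card (sd C (\<phi> B)) = 1"
    then obtain C where C: "C \<in> F" "RR F k (\<phi> A) C" "card (sd C (\<phi> B)) = 1" by blast
    from C(1) img obtain C' where C': "C' \<in> F" "C = \<phi> C'" by blast
    have "RR F k A C'" using Suc.IH[OF C'(1)] C(2) C'(2) by simp
    moreover have "card (sd C' B) = 1" using ed C'(1) Suc.prems C(3) C'(2) by simp
    ultimately show "\<exists>C\<in>F. RR F k A C \<and> card (sd C B) = 1" using C'(1) by blast
  next
    assume "\<exists>C\<in>F. RR F k A C \<and> card (sd C B) = 1"
    then obtain C where C: "C \<in> F" "RR F k A C" "card (sd C B) = 1" by blast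
    have "\<phi> C \<in> F" using img C(1) by blast
    moreover have "RR F k (\<phi> A) (\<phi> C)" using Suc.IH[OF C(1)] C(2) by simp
    moreover have "card (sd (\<phi> C) (\<phi> B)) = 1" using ed C(1) Suc.prems C(3) by simp
    ultimately show "\<exists>C\<in>F. RR F k (\<phi> A) C \<and> card (sd C (\<phi> B)) = 1" by blast
  qed
  then show ?case using Suc.IH[OF Suc.prems] by simp
qed

lemma tar_edge_D:
  assumes "{u, w} \<in> TAR_edges X V E"
  shows "card (sd u w) = 1"
proof -
  have "\<exists>S1 S2. {u, w} = {S1, S2} \<and> S1 \<in> X V E \<and> S2 \<in> X V E \<and> card (sd S1 S2) = 1"
    using assms unfolding TAR_edges_def mem_Collect_eq .
  then obtain S1 S2 where e: "{u, w} = {S1, S2}" "card (sd S1 S2) = 1"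
    by (elim exE conjE)
  then have o: "(u = S1 \<and> w = S2) \<or> (u = S2 \<and> w = S1)"
    by (simp add: doubleton_eq_iff)
  have sw: "sd S2 S1 = sd S1 S2" by blast
  from o show ?thesis
  proof
    assume "u = S1 \<and> w = S2" then show ?thesis using e(2) by simp
  next
    assume "u = S2 \<and> w = S1" then show ?thesis using e(2) sw by simp
  qed
qed

lemma tar_edge_I:
  assumes "u \<in> X V E" "w \<in> X V E" "card (sd u w) = 1"
  shows "{u, w} \<in> TAR_edges X V E"
  unfolding TAR_edges_def mem_Collect_eq
  by (rule exI[of _ u], rule exI[of _ w]) (simp add: assms)

lemma sd_single: assumes "(A - B) \<union> (B - A) = {x}" "x \<in> B" shows "A = B - {x}"
proof (rule set_eqI)
  fix z
  have "z \<in> (A - B) \<union> (B - A) \<longleftrightarrow> z = x" using assms(1) by simp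
  then show "z \<in> A \<longleftrightarrow> z \<in> B - {x}" using assms(2) by blast
qed

lemma sd_del: assumes "x \<in> T" shows "(T - (T - {x})) \<union> ((T - {x}) - T) = {x}"
  using assms by blast

theorem proposition2p17:
  fixes X :: "'a set \<Rightarrow> 'a set set \<Rightarrow> 'a set set"
    and V :: "'a set" and E :: "'a set set"
    and \<phi> :: "'a set \<Rightarrow> 'a set"
  assumes "Xset_property X"
    and "graph V E"
    and "no_isolated V E"
    and "graph_automorphism (TAR_vertices X V E) (TAR_edges X V E) \<phi>"
    and "\<phi> V \<noteq> V"
  shows "has_perfect_matching (TAR_vertices X V E) (TAR_edges X V E)"
proof -
  define F where "F = X V E"
  have fin: "finite V" and Vne: "V \<noteq> {}" using assms(2) by (auto simp: graph_def)
  have sub: "\<forall>S\<in>F. S \<subseteq> V" and up: "\<forall>S T. S \<in> F \<and> S \<subseteq> T \<and> T \<subseteq> V \<longrightarrow> T \<in> F"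
    and del: "\<forall>v\<in>V. V - {v} \<in> F"
  proof -
    have H: "(\<forall>S\<in>X V E. S \<subseteq> V)
     \<and> X V E \<noteq> {}
     \<and> (\<forall>S T. S \<in> X V E \<and> S \<subseteq> T \<and> T \<subseteq> V \<longrightarrow> T \<in> X V E)
     \<and> {} \<notin> X V E
     \<and> (disconnected V E \<longrightarrow>
          (\<forall>S. S \<in> X V E \<longleftrightarrow>
               S \<subseteq> V \<and> (\<forall>C\<in>components V E. S \<inter> C \<in> X C (induced_edges E C))))
     \<and> (no_isolated V E \<longrightarrow> (\<forall>v\<in>V. V - {v} \<in> X V E))"
      by (rule assms(1)[unfolded Xset_property_def, THEN spec, THEN spec, THEN mp, OF assms(2)])
    have H1: "\<forall>S\<in>X V E. S \<subseteq> V" using H by (rule conjunct1)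
    have H2: "\<forall>S T. S \<in> X V E \<and> S \<subseteq> T \<and> T \<subseteq> V \<longrightarrow> T \<in> X V E"
      using H by (blast dest: conjunct2 conjunct1)
    have H3: "no_isolated V E \<longrightarrow> (\<forall>v\<in>V. V - {v} \<in> X V E)"
      using H by (rule conjunct2[OF conjunct2[OF conjunct2[OF conjunct2[OF conjunct2]]]])
    show "\<forall>S\<in>F. S \<subseteq> V" unfolding F_def by (rule H1)
    show "\<forall>S T. S \<in> F \<and> S \<subseteq> T \<and> T \<subseteq> V \<longrightarrow> T \<in> F" unfolding F_def by (rule H2)
    show "\<forall>v\<in>V. V - {v} \<in> F" unfolding F_def by (rule mp[OF H3 assms(3)])
  qed
  have VF: "V \<in> F" proof -
    obtain v where "v \<in> V" using Vne by blast
    then show ?thesis using del up[rule_format, of "V - {v}" V] by blast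
  qed
  have edge_iff: "{u, w} \<in> TAR_edges X V E \<longleftrightarrow> card (sd u w) = 1" if "u \<in> F" "w \<in> F" for u w
    using tar_edge_D[of u w X V E] tar_edge_I[of u X V E w] that[unfolded F_def] by blast
  have bij: "bij_betw \<phi> F F" using assms(4) unfolding graph_automorphism_def TAR_vertices_def F_def by blast
  have ed: "\<forall>u\<in>F. \<forall>w\<in>F. card (sd u w) = 1 \<longleftrightarrow> card (sd (\<phi> u) (\<phi> w)) = 1"
  proof (intro ballI)
    fix u w assume uw: "u \<in> F" "w \<in> F"
    have "\<phi> u \<in> F" "\<phi> w \<in> F" using bij uw bij_betwE by blast+
    then show "card (sd u w) = 1 \<longleftrightarrow> card (sd (\<phi> u) (\<phi> w)) = 1"
      using assms(4) uw edge_iff unfolding graph_automorphism_def TAR_vertices_def F_def by metis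
  qed
  have finsd: "finite (sd A B)" if "A \<in> F" "B \<in> F" for A B
    using that fin sub by (meson finite_Un finite_Diff finite_subset)
  have dist: "card (sd (\<phi> A) (\<phi> B)) = card (sd A B)" if AB: "A \<in> F" "B \<in> F" for A B
  proof -
    have pA: "\<phi> A \<in> F" "\<phi> B \<in> F" using bij AB bij_betwE by blast+
    have eq: "RR F k (\<phi> A) (\<phi> B) \<longleftrightarrow> RR F k A B" for k using RR_pres[OF bij ed AB(1) AB(2)] .
    have c1: "RR F k (\<phi> A) (\<phi> B) \<longleftrightarrow> card (sd (\<phi> A) (\<phi> B)) \<le> k" for k
      using RR_card[OF fin sub up pA(1) pA(2)] .
    have c2: "RR F k A B \<longleftrightarrow> card (sd A B) \<le> k" for k
      using RR_card[OF fin sub up AB(1) AB(2)] .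
    show ?thesis using eq c1 c2 by (meson le_antisym order_refl)
  qed
  have img: "\<phi> ` F = F" using bij by (simp add: bij_betw_def)
  define S where "S = \<phi> V"
  have SF: "S \<in> F" using img VF S_def by blast
  then have SV: "S \<subseteq> V" using sub by blast
  then obtain x where x: "x \<in> V" "x \<notin> S" using assms(5) S_def by blast
  have SxF: "insert x S \<in> F" using up[rule_format, of S "insert x S"] SF x SV by blast
  then obtain W where W: "W \<in> F" "\<phi> W = insert x S" using img by (metis imageE)
  have "card (sd W V) = card (sd (insert x S) S)" using dist[OF W(1) VF] W S_def by simp
  also have "sd (insert x S) S = {x}" using x by blast
  finally have cWV: "card (sd W V) = 1" by simp
  have WV: "W \<subseteq> V" using sub W by blast
  obtain v where v: "v \<in> V" "W = V - {v}"
  proof -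
    from cWV obtain v where "sd W V = {v}" by (auto simp: card_Suc_eq)
    then show ?thesis using that WV by blast
  qed
  have main: "T - {x} \<in> F" if T: "T \<in> F" "x \<in> T" for T
  proof -
    obtain U where U: "U \<in> F" "\<phi> U = T" using img T by (metis imageE)
    have UV: "U \<subseteq> V" using sub U by blast
    have TV: "T \<subseteq> V" using sub T by blast
    have e1: "sd T S = insert x (sd T (insert x S))" "x \<notin> sd T (insert x S)" using T x by blast+
    have "card (sd T S) = Suc (card (sd T (insert x S)))"
      using e1 finsd[OF T(1) SxF] by simp
    then have "card (sd U V) = Suc (card (sd U W))"
      using dist[OF U(1) VF] dist[OF U(1) W(1)] U W S_def by simp
    then have vU: "v \<notin> U"
    proof -
      assume cc: "card (sd U V) = Suc (card (sd U W))"
      show "v \<notin> U"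
      proof
        assume "v \<in> U"
        then have "sd U W = insert v (sd U V)" "v \<notin> sd U V" using v UV by blast+
        then have "card (sd U W) = Suc (card (sd U V))" using finsd[OF U(1) VF] by simp
        then show False using cc by simp
      qed
    qed
    have UvF: "insert v U \<in> F" using up[rule_format, of U "insert v U"] U v UV by blast
    define T' where "T' = \<phi> (insert v U)"
    have T'F: "T' \<in> F" using img UvF T'_def by blast
    have "sd (insert v U) U = {v}" using vU by blast
    then have cTT: "card (sd T' T) = 1" using dist[OF UvF U(1)] T'_def U by simp
    have "sd (insert v U) W = insert v (sd (insert v U) V)" "v \<notin> sd (insert v U) V"
      using v vU UV by blast+
    then have "card (sd (insert v U) W) = Suc (card (sd (insert v U) V))"
      using finsd[OF UvF VF] by simp
    then have cc2: "card (sd T' (insert x S)) = Suc (card (sd T' S))"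
      using dist[OF UvF VF] dist[OF UvF W(1)] T'_def W S_def by simp
    have xT': "x \<notin> T'"
    proof
      assume "x \<in> T'"
      then have "sd T' S = insert x (sd T' (insert x S))" "x \<notin> sd T' (insert x S)" using x by blast+
      then have "card (sd T' S) = Suc (card (sd T' (insert x S)))" using finsd[OF T'F SxF] by simp
      then show False using cc2 by simp
    qed
    have "x \<in> sd T' T" using xT' T by blast
    then have "sd T' T = {x}" using cTT by (metis card_1_singletonE singletonD)
    then have "T' = T - {x}" using T(2) by (rule sd_single)
    then show ?thesis using T'F by simp
  qed
  define M where "M = {{T, T - {x}} | T. T \<in> F \<and> x \<in> T}"
  have Mmem: "e \<in> M \<longleftrightarrow> (\<exists>T. e = {T, T - {x}} \<and> T \<in> F \<and> x \<in> T)" for e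
    by (simp only: M_def mem_Collect_eq)
  have Msub: "M \<subseteq> TAR_edges X V E"
  proof
    fix e assume "e \<in> M"
    then have "\<exists>T. e = {T, T - {x}} \<and> T \<in> F \<and> x \<in> T" using Mmem[of e] by (rule iffD1[rotated])
    then obtain T where T: "e = {T, T - {x}}" "T \<in> F" "x \<in> T" by (elim exE conjE)
    have "sd T (T - {x}) = {x}" using T(3) by (rule sd_del)
    then have "card (sd T (T - {x})) = 1" by (simp only: card.empty card_insert_if finite.emptyI empty_iff if_False)
    then have "{T, T - {x}} \<in> TAR_edges X V E" by (rule iffD2[OF edge_iff[OF T(2) main[OF T(2,3)]]])
    then show "e \<in> TAR_edges X V E" by (simp only: T(1))
  qed
  have Mget: "\<exists>T'. e = {T', T' - {x}} \<and> T' \<in> F \<and> x \<in> T'" if "e \<in> M" for e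
    using Mmem[of e] that by (rule iffD1)
  have uniq: "\<exists>!e. e \<in> M \<and> T \<in> e" if T: "T \<in> F" for T
  proof (cases "x \<in> T")
    case True
    have inM: "{T, T - {x}} \<in> M" using Mmem[of "{T, T - {x}}"] T True by blast
    show ?thesis
    proof (rule ex1I[of _ "{T, T - {x}}"])
      show "{T, T - {x}} \<in> M \<and> T \<in> {T, T - {x}}" using inM by simp
    next
      fix e assume a: "e \<in> M \<and> T \<in> e"
      from a have "e \<in> M" by (rule conjunct1)
      then have "\<exists>T'. e = {T', T' - {x}} \<and> T' \<in> F \<and> x \<in> T'" by (rule Mget)
      then obtain T' where e: "e = {T', T' - {x}}" "x \<in> T'" by (elim exE conjE)
      have "T \<in> {T', T' - {x}}" using a e(1) by simp
      moreover have "T \<noteq> T' - {x}" using True by blast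
      ultimately have "T = T'" by simp
      then show "e = {T, T - {x}}" using e(1) by simp
    qed
  next
    case False
    have TV: "T \<subseteq> V" using sub T by blast
    have ins: "insert x T \<in> F" using up[rule_format, of T "insert x T"] T x TV by blast
    have xe: "insert x T - {x} = T" using False by simp
    have inM: "{insert x T, insert x T - {x}} \<in> M"
      using Mmem[of "{insert x T, insert x T - {x}}"] ins by blast
    then have inM': "{insert x T, T} \<in> M" by (simp only: xe)
    show ?thesis
    proof (rule ex1I[of _ "{insert x T, T}"])
      show "{insert x T, T} \<in> M \<and> T \<in> {insert x T, T}" using inM' by simp
    next
      fix e assume a: "e \<in> M \<and> T \<in> e"
      from a have "e \<in> M" by (rule conjunct1)
      then have "\<exists>T'. e = {T', T' - {x}} \<and> T' \<in> F \<and> x \<in> T'" by (rule Mget)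
      then obtain T' where e: "e = {T', T' - {x}}" "x \<in> T'" by (elim exE conjE)
      have "T \<in> {T', T' - {x}}" using a e(1) by simp
      moreover have "T \<noteq> T'" using False e(2) by blast
      ultimately have "T = T' - {x}" by simp
      then have "T' = insert x T" using e(2) by blast
      then show "e = {insert x T, T}" using e(1) xe by simp
    qed
  qed
  show ?thesis unfolding has_perfect_matching_def TAR_vertices_def
  proof (rule exI[of _ M], intro conjI ballI)
    show "M \<subseteq> TAR_edges X V E" by (rule Msub)
  next
    fix v assume "v \<in> X V E"
    then have "v \<in> F" by (simp only: F_def)
    then show "\<exists>!e. e \<in> M \<and> v \<in> e" by (rule uniq)
  qed
qed

end
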